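(* Let $C,M\ge1$ and $\mathbf{Q}=\mathbf{A}+\mathbf{B}\in\mathbb{R}^{CM\times CM}$, where $\mathbf{A}=\mathrm{diag}(a_1\mathbf{1}_C^\top,\dots,a_M\mathbf{1}_C^\top)$ with arbitrary real $a_1,\dots,a_M$, and $\mathbf{B}$ is the $M\times M$ block matrix whose $(i,j)$ block is $b_{i,j}\mathbf{J}_C$ for real $b_{i,j}$. Then $$\mathrm{msgn}(\mathbf{Q})=\mathrm{diag}\big(\mathrm{sgn}(a_1)\mathbf{I}_C,\dots,\mathrm{sgn}(a_M)\mathbf{I}_C\big)+\mathbf{B}',$$ where $\mathbf{B}'$ is an $M\times M$ block matrix whose $(i,j)$ block is a constant multiple of $\mathbf{J}_C$, and every entry of $\mathbf{B}'$ is $\mathcal{O}(M/C)$.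
   Context: $\mathbf{1}_C$ is the all-ones vector in $\mathbb{R}^C$, $\mathbf{J}_C$ the $C\times C$ all-ones matrix, $\mathbf{I}_C$ the identity. For a matrix with SVD $\mathbf{X}=\mathbf{U}\boldsymbol\Sigma\mathbf{V}^\top$, $\mathrm{msgn}(\mathbf{X})=\mathbf{U}\,\mathrm{sgn}(\boldsymbol\Sigma)\mathbf{V}^\top$, with $\mathrm{sgn}(0)=0$. $\mathcal{O}(M/C)$ is with respect to $C/M\to\infty$. *)

theory Defs
  imports Complex_Main "Jordan_Normal_Form.Matrix"
begin

definition is_svd :: "nat \<Rightarrow> real mat \<Rightarrow> real mat \<Rightarrow> real mat \<Rightarrow> real mat \<Rightarrow> bool" where
  "is_svd n X U S V \<longleftrightarrow>
     X \<in> carrier_mat n n \<and> U \<in> carrier_mat n n \<and> S \<in> carrier_mat n n \<and> V \<in> carrier_mat n n \<and>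
     transpose_mat U * U = 1\<^sub>m n \<and> transpose_mat V * V = 1\<^sub>m n \<and>
     diagonal_mat S \<and> (\<forall>i<n. S $$ (i,i) \<ge> 0) \<and>
     X = U * S * transpose_mat V"

definition msgn :: "real mat \<Rightarrow> real mat" where
  "msgn X = (SOME Y. \<exists>U S V. is_svd (dim_row X) X U S V \<and>
                         Y = U * map_mat sgn S * transpose_mat V)"

text \<open>Q = A + B in R^{CM x CM}; row index r lies in block r div C (blocks 0..M-1).\<close>
definition Qmat :: "nat \<Rightarrow> nat \<Rightarrow> (nat \<Rightarrow> real) \<Rightarrow> (nat \<Rightarrow> nat \<Rightarrow> real) \<Rightarrow> real mat" where
  "Qmat C M a b = mat (C*M) (C*M) (\<lambda>(r,s).
      (if r = s then a (r div C) else 0) + b (r div C) (s div C))"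

end

theory Submission
  imports Defs "Jordan_Normal_Form.Jordan_Normal_Form"
begin


lemma exists_orth_vec:
  fixes vs :: "nat \<Rightarrow> real vec"
  assumes kn: "k < n" and vs: "\<And>i. i < k \<Longrightarrow> vs i \<in> carrier_vec n"
  shows "\<exists>x \<in> carrier_vec n. x \<noteq> 0\<^sub>v n \<and> (\<forall>i<k. vs i \<bullet> x = 0)"
proof -
  define c where "c = (\<lambda>i. if i < k then vs i else 0\<^sub>v n)"
  define B where "B = mat\<^sub>r n n (\<lambda>i. if i = n - 1 then 0\<^sub>v n else c i)"
  have c: "c \<in> {0..<n} \<rightarrow> carrier_vec n" using vs unfolding c_def by auto
  have "det B = 0" unfolding B_def by (rule det_row_0[OF _ c], use kn in auto)
  moreover have B: "B \<in> carrier_mat n n" unfolding B_def by auto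
  ultimately obtain x where x: "x \<in> carrier_vec n" "x \<noteq> 0\<^sub>v n" "B *\<^sub>v x = 0\<^sub>v n"
    using det_0_iff_vec_prod_zero by blast
  have "vs i \<bullet> x = 0" if i: "i < k" for i
  proof -
    have "(B *\<^sub>v x) $ i = 0" using x i kn by simp
    moreover have "(B *\<^sub>v x) $ i = row B i \<bullet> x" using B i kn by auto
    moreover have "row B i = vs i" unfolding B_def c_def using i kn vs[OF i] by auto
    ultimately show ?thesis by simp
  qed
  then show ?thesis using x by blast
qed



definition onset :: "nat \<Rightarrow> (nat \<Rightarrow> real vec) \<Rightarrow> nat set \<Rightarrow> bool" where
  "onset n u K \<longleftrightarrow> (\<forall>k\<in>K. u k \<in> carrier_vec n) \<and>
     (\<forall>k\<in>K. \<forall>l\<in>K. u k \<bullet> u l = (if k = l then 1 else 0))"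

lemma exists_orth_vec_set:
  fixes v :: "nat \<Rightarrow> real vec"
  assumes K: "finite K" "card K < n" and v: "\<And>k. k \<in> K \<Longrightarrow> v k \<in> carrier_vec n"
  shows "\<exists>x \<in> carrier_vec n. x \<noteq> 0\<^sub>v n \<and> (\<forall>k\<in>K. v k \<bullet> x = 0)"
proof -
  obtain h where h: "bij_betw h {0..<card K} K" using ex_bij_betw_nat_finite[OF K(1)] by blast
  have "\<And>i. i < card K \<Longrightarrow> (v \<circ> h) i \<in> carrier_vec n"
    using bij_betwE[OF h] v by auto
  from exists_orth_vec[of "card K" n "v \<circ> h", OF K(2) this] obtain x where x: "x \<in> carrier_vec n" "x \<noteq> 0\<^sub>v n"
    "\<forall>i<card K. (v \<circ> h) i \<bullet> x = 0" by blast
  have "\<forall>k\<in>K. v k \<bullet> x = 0"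
  proof
    fix k assume "k \<in> K"
    then obtain i where "i < card K" "k = h i" using h
      by (metis atLeastLessThan_iff bij_betw_def imageE)
    then show "v k \<bullet> x = 0" using x(3) by auto
  qed
  then show ?thesis using x by blast
qed

lemma self_scalar_prod_pos:
  fixes x :: "real vec"
  assumes "x \<in> carrier_vec n" "x \<noteq> 0\<^sub>v n"
  shows "x \<bullet> x > 0"
proof -
  have eq: "x \<bullet> x = (\<Sum>i\<in>{0..<n}. x $ i * x $ i)" using assms(1) by (simp add: scalar_prod_def)
  have ge: "\<forall>i\<in>{0..<n}. x $ i * x $ i \<ge> 0" by simp
  obtain i where i: "i < n" "x $ i \<noteq> 0" using assms by (metis carrier_vecD eq_vecI index_zero_vec(1,2))
  have "x $ i * x $ i > 0" using i not_real_square_gt_zero by blast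
  then have "(\<Sum>i\<in>{0..<n}. x $ i * x $ i) > 0"
    using sum_pos2[of "{0..<n}" i "\<lambda>i. x $ i * x $ i"] i ge by auto
  then show ?thesis using eq by simp
qed

lemma self_scalar_prod_nonneg:
  fixes x :: "real vec"
  shows "x \<bullet> x \<ge> 0"
  by (simp add: scalar_prod_def sum_nonneg)

lemma normalize_vec:
  fixes x :: "real vec"
  assumes "x \<in> carrier_vec n" "x \<noteq> 0\<^sub>v n"
  defines "z \<equiv> (1 / sqrt (x \<bullet> x)) \<cdot>\<^sub>v x"
  shows "z \<in> carrier_vec n" "z \<bullet> z = 1" "\<And>y. y \<in> carrier_vec n \<Longrightarrow> y \<bullet> x = 0 \<Longrightarrow> y \<bullet> z = 0"
proof -
  have p: "x \<bullet> x > 0" by (rule self_scalar_prod_pos[OF assms(1,2)])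
  show "z \<in> carrier_vec n" unfolding z_def using assms by simp
  have "z \<bullet> z = (1 / sqrt (x \<bullet> x)) * ((1 / sqrt (x \<bullet> x)) * (x \<bullet> x))"
    unfolding z_def using assms(1) by simp
  also have "\<dots> = 1" using p by (simp add: field_simps)
  finally show "z \<bullet> z = 1" .
  fix y assume "y \<in> carrier_vec n" "y \<bullet> x = 0"
  then show "y \<bullet> z = 0" unfolding z_def using assms(1) by simp
qed

lemma onb_complete:
  assumes "K \<subseteq> {..<n}" "onset n u K"
  shows "\<exists>u'. (\<forall>k\<in>K. u' k = u k) \<and> onset n u' {..<n}"
proof -
  obtain m where "m = card ({..<n} - K)" by blast
  then show ?thesis using assms
  proof (induction m arbitrary: K u)
    case 0
    then have "K = {..<n}" by auto
    then show ?case using 0 by blast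
  next
    case (Suc m)
    have "{..<n} - K \<noteq> {}" using Suc(2) by (metis card.empty nat.simps(3))
    then obtain k0 where k0: "k0 \<in> {..<n} - K" by blast
    have fK: "finite K" using Suc(3) finite_subset by blast
    have "K \<subset> {..<n}" using k0 Suc(3) by auto
    then have "card K < card {..<n}" by (intro psubset_card_mono) auto
    then have cK: "card K < n" by simp
    have uc: "\<And>k. k \<in> K \<Longrightarrow> u k \<in> carrier_vec n" using Suc(4) unfolding onset_def by auto
    obtain x where x: "x \<in> carrier_vec n" "x \<noteq> 0\<^sub>v n" "\<forall>k\<in>K. u k \<bullet> x = 0"
      using exists_orth_vec_set[of K n u, OF fK cK uc] by blast
    define z where "z = (1 / sqrt (x \<bullet> x)) \<cdot>\<^sub>v x"
    note nz = normalize_vec[OF x(1,2), folded z_def]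
    define u1 where "u1 = u(k0 := z)"
    have zo: "\<And>k. k \<in> K \<Longrightarrow> u k \<bullet> z = 0" using nz(3) uc x(3) by blast
    have zo': "z \<bullet> u k = 0" if "k \<in> K" for k
      using zo[OF that] comm_scalar_prod[OF nz(1) uc[OF that]] by simp
    have on1: "onset n u1 (insert k0 K)"
      unfolding onset_def
    proof (intro conjI ballI)
      fix k assume "k \<in> insert k0 K" then show "u1 k \<in> carrier_vec n"
        using uc nz(1) unfolding u1_def by auto
    next
      fix k l assume kl: "k \<in> insert k0 K" "l \<in> insert k0 K"
      show "u1 k \<bullet> u1 l = (if k = l then 1 else 0)"
      proof (cases "k = k0")
        case True
        then show ?thesis using kl k0 nz(2) zo' unfolding u1_def by (cases "l = k0") auto
      next
        case False
        then have "k \<in> K" using kl by auto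
        then show ?thesis using kl k0 zo Suc(4) False unfolding u1_def onset_def
          by (cases "l = k0") auto
      qed
    qed
    have eqs: "{..<n} - insert k0 K = ({..<n} - K) - {k0}" by auto
    have "m = card ({..<n} - insert k0 K)" unfolding eqs using Suc(2) k0
      by (simp add: card_Diff_singleton)
    from Suc(1)[OF this _ on1] k0 Suc(3) obtain u' where
      "(\<forall>k\<in>insert k0 K. u' k = u1 k)" "onset n u' {..<n}" by auto
    then have "\<forall>k\<in>K. u' k = u k" unfolding u1_def using k0 by auto
    then show ?case using \<open>onset n u' {..<n}\<close> by blast
  qed
qed



definition colmat :: "nat \<Rightarrow> (nat \<Rightarrow> real vec) \<Rightarrow> real mat" where
  "colmat n u = mat n n (\<lambda>(i,j). u j $ i)"

lemma colmat_carrier[simp]: "colmat n u \<in> carrier_mat n n"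
  unfolding colmat_def by simp

lemma colmat_dims[simp]: "dim_row (colmat n u) = n" "dim_col (colmat n u) = n"
  unfolding colmat_def by simp_all

lemma col_colmat: "k < n \<Longrightarrow> u k \<in> carrier_vec n \<Longrightarrow> col (colmat n u) k = u k"
  unfolding colmat_def by (auto intro!: eq_vecI)

lemma row_transpose_colmat: "k < n \<Longrightarrow> u k \<in> carrier_vec n \<Longrightarrow> row (transpose_mat (colmat n u)) k = u k"
  using col_colmat by simp

lemma colmat_orth:
  assumes "onset n u {..<n}"
  shows "transpose_mat (colmat n u) * colmat n u = 1\<^sub>m n"
proof (rule eq_matI)
  fix i j assume ij: "i < dim_row (1\<^sub>m n)" "j < dim_col (1\<^sub>m n)"
  then have "(transpose_mat (colmat n u) * colmat n u) $$ (i,j) = u i \<bullet> u j"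
    using assms row_transpose_colmat col_colmat unfolding onset_def by auto
  also have "\<dots> = 1\<^sub>m n $$ (i,j)" using assms ij unfolding onset_def by auto
  finally show "(transpose_mat (colmat n u) * colmat n u) $$ (i,j) = 1\<^sub>m n $$ (i,j)" .
qed auto

lemma colmat_orth2:
  assumes "onset n u {..<n}"
  shows "colmat n u * transpose_mat (colmat n u) = 1\<^sub>m n"
  by (rule mat_mult_left_right_inverse[OF _ _ colmat_orth[OF assms]]) auto

lemma orth_square:
  fixes U :: "real mat"
  assumes "U \<in> carrier_mat n n" "transpose_mat U * U = 1\<^sub>m n"
  shows "U * transpose_mat U = 1\<^sub>m n"
  by (rule mat_mult_left_right_inverse[OF _ _ assms(2)]) (use assms(1) in auto)

lemma basis_eq:
  fixes a b :: "real vec"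
  assumes on: "onset n u {..<n}" and ab: "a \<in> carrier_vec n" "b \<in> carrier_vec n"
    and eq: "\<And>l. l < n \<Longrightarrow> u l \<bullet> a = u l \<bullet> b"
  shows "a = b"
proof -
  let ?P = "colmat n u"
  have uc: "\<And>l. l < n \<Longrightarrow> u l \<in> carrier_vec n" using on unfolding onset_def by auto
  have "transpose_mat ?P *\<^sub>v a = transpose_mat ?P *\<^sub>v b"
  proof (rule eq_vecI)
    fix l assume "l < dim_vec (transpose_mat ?P *\<^sub>v b)"
    then have l: "l < n" by simp
    then show "(transpose_mat ?P *\<^sub>v a) $ l = (transpose_mat ?P *\<^sub>v b) $ l"
      using eq[OF l] row_transpose_colmat[of l n u, OF l uc[OF l]] by simp
  qed simp
  then have "?P *\<^sub>v (transpose_mat ?P *\<^sub>v a) = ?P *\<^sub>v (transpose_mat ?P *\<^sub>v b)" by simp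
  then have "(?P * transpose_mat ?P) *\<^sub>v a = (?P * transpose_mat ?P) *\<^sub>v b"
    using ab by (simp add: assoc_mult_mat_vec[of _ n n _ n])
  then show ?thesis using colmat_orth2[OF on] ab by simp
qed



lemma sym_real_eigenvector:
  fixes B :: "real mat"
  assumes B: "B \<in> carrier_mat k k" and k: "k > 0"
    and sym: "\<And>i j. i < k \<Longrightarrow> j < k \<Longrightarrow> B $$ (i,j) = B $$ (j,i)"
  shows "\<exists>lam y. eigenvector B y lam"
proof -
  define Bc where "Bc = map_mat complex_of_real B"
  have Bc: "Bc \<in> carrier_mat k k" using B by (simp add: Bc_def)
  obtain as where as: "char_poly Bc = (\<Prod>a\<leftarrow>as. [:-a,1:])" "length as = k"
    using char_poly_factorized[OF Bc] by blast
  then obtain mu rest where "as = mu # rest" using k by (cases as) auto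
  then have "poly (char_poly Bc) mu = 0" using as(1) by simp
  then have "eigenvalue Bc mu" using eigenvalue_root_char_poly[OF Bc] by simp
  then obtain w where w: "eigenvector Bc w mu" unfolding eigenvalue_def by blast
  then have wc: "w \<in> carrier_vec k" "w \<noteq> 0\<^sub>v k" "Bc *\<^sub>v w = mu \<cdot>\<^sub>v w"
    unfolding eigenvector_def using Bc by auto
  define s where "s = (\<Sum>i\<in>{0..<k}. cnj (w$i) * (Bc *\<^sub>v w)$i)"
  define r where "r = (\<Sum>i\<in>{0..<k}. (cmod (w$i))^2)"
  have s1: "s = mu * of_real r"
  proof -
    have "s = (\<Sum>i\<in>{0..<k}. mu * (w$i * cnj (w$i)))"
      unfolding s_def using wc by (intro sum.cong) (auto simp: algebra_simps)
    also have "\<dots> = mu * (\<Sum>i\<in>{0..<k}. w$i * cnj (w$i))"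
      by (simp add: sum_distrib_left)
    also have "(\<Sum>i\<in>{0..<k}. w$i * cnj (w$i)) = of_real r"
      unfolding r_def of_real_sum by (intro sum.cong refl) (rule complex_norm_square[symmetric])
    finally show ?thesis .
  qed
  have s2: "s = (\<Sum>i\<in>{0..<k}. \<Sum>j\<in>{0..<k}. cnj (w$i) * of_real (B$$(i,j)) * w$j)"
    unfolding s_def using wc(1) B
    by (intro sum.cong) (auto simp: Bc_def scalar_prod_def sum_distrib_left mult.assoc)
  have "cnj s = (\<Sum>i\<in>{0..<k}. \<Sum>j\<in>{0..<k}. w$i * of_real (B$$(i,j)) * cnj (w$j))"
    unfolding s2 by (simp add: cnj_sum)
  also have "\<dots> = (\<Sum>j\<in>{0..<k}. \<Sum>i\<in>{0..<k}. w$i * of_real (B$$(i,j)) * cnj (w$j))"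
    by (rule sum.swap)
  also have "\<dots> = s" unfolding s2
    by (intro sum.cong refl) (auto simp: sym mult.commute mult.left_commute)
  finally have cs: "cnj s = s" .
  obtain i where i: "i < k" "w $ i \<noteq> 0" using wc by (metis carrier_vecD eq_vecI index_zero_vec(1,2))
  have "r > 0" unfolding r_def
    using sum_pos2[of "{0..<k}" i "\<lambda>i. (cmod (w$i))^2"] i by auto
  have "cnj mu * of_real r = mu * of_real r" using cs s1 by simp
  then have "cnj mu = mu" using \<open>r > 0\<close> by simp
  then have "Im (cnj mu) = Im mu" by simp
  then have "Im mu = 0" by simp
  define lam where "lam = Re mu"
  have mu: "mu = of_real lam" unfolding lam_def using \<open>Im mu = 0\<close> by (simp add: complex_eq_iff)
  have "poly (char_poly Bc) (of_real lam) = 0"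
    using \<open>eigenvalue Bc mu\<close> mu eigenvalue_root_char_poly[OF Bc] by simp
  moreover have "char_poly Bc = map_poly of_real (char_poly B)"
    unfolding Bc_def by (rule comm_ring_hom.char_poly_hom[OF of_real_hom.comm_ring_hom_axioms B])
  ultimately have "poly (char_poly B) lam = 0" by (simp add: of_real_hom.poly_map_poly)
  then have "eigenvalue B lam" using eigenvalue_root_char_poly[OF B] by simp
  then show ?thesis unfolding eigenvalue_def by blast
qed



lemma scalar_lincomb:
  fixes u :: "real vec"
  assumes u: "u \<in> carrier_vec n" and w: "\<And>j. j \<in> J \<Longrightarrow> w j \<in> carrier_vec n" and J: "finite J"
  shows "u \<bullet> vec n (\<lambda>i. \<Sum>j\<in>J. c j * w j $ i) = (\<Sum>j\<in>J. c j * (u \<bullet> w j))"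
proof -
  have "u \<bullet> vec n (\<lambda>i. \<Sum>j\<in>J. c j * w j $ i) = (\<Sum>i\<in>{0..<n}. \<Sum>j\<in>J. u $ i * (c j * w j $ i))"
    using u by (simp add: scalar_prod_def sum_distrib_left)
  also have "\<dots> = (\<Sum>j\<in>J. \<Sum>i\<in>{0..<n}. u $ i * (c j * w j $ i))" by (rule sum.swap)
  also have "\<dots> = (\<Sum>j\<in>J. c j * (u \<bullet> w j))"
  proof (rule sum.cong[OF refl])
    fix j assume "j \<in> J"
    then have "dim_vec (w j) = n" using w by auto
    then show "(\<Sum>i\<in>{0..<n}. u $ i * (c j * w j $ i)) = c j * (u \<bullet> w j)"
      by (simp add: scalar_prod_def sum_distrib_left algebra_simps)
  qed
  finally show ?thesis .
qed

lemma sym_transpose: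
  fixes A :: "real mat"
  assumes A: "A \<in> carrier_mat n n" and sym: "\<And>i j. i < n \<Longrightarrow> j < n \<Longrightarrow> A $$ (i,j) = A $$ (j,i)"
  shows "transpose_mat A = A"
  by (rule eq_matI) (use A sym in auto)

lemma sym_scalar:
  fixes A :: "real mat"
  assumes A: "A \<in> carrier_mat n n" and sym: "\<And>i j. i < n \<Longrightarrow> j < n \<Longrightarrow> A $$ (i,j) = A $$ (j,i)"
    and ab: "a \<in> carrier_vec n" "b \<in> carrier_vec n"
  shows "a \<bullet> (A *\<^sub>v b) = (A *\<^sub>v a) \<bullet> b"
  using transpose_vec_mult_scalar[OF A ab(2) ab(1)] sym_transpose[OF A sym] by simp

lemma spectral_step:
  fixes A :: "real mat"
  assumes A: "A \<in> carrier_mat n n" and sym: "\<And>i j. i < n \<Longrightarrow> j < n \<Longrightarrow> A $$ (i,j) = A $$ (j,i)"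
    and mn: "m < n" and on: "onset n v {..<m}" and ev: "\<And>k. k < m \<Longrightarrow> A *\<^sub>v v k = lam k \<cdot>\<^sub>v v k"
  shows "\<exists>z mu. z \<in> carrier_vec n \<and> z \<bullet> z = 1 \<and> (\<forall>k<m. v k \<bullet> z = 0) \<and> A *\<^sub>v z = mu \<cdot>\<^sub>v z"
proof -
  obtain w where wv: "\<forall>k\<in>{..<m}. w k = v k" and won: "onset n w {..<n}"
    using onb_complete[of "{..<m}" n v] on mn by auto
  have wc: "\<And>l. l < n \<Longrightarrow> w l \<in> carrier_vec n" using won unfolding onset_def by auto
  have wo: "\<And>k l. k < n \<Longrightarrow> l < n \<Longrightarrow> w k \<bullet> w l = (if k = l then 1 else 0)"
    using won unfolding onset_def by auto
  define k where "k = n - m"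
  have k: "k > 0" unfolding k_def using mn by simp
  define B where "B = mat k k (\<lambda>(i,j). w (m+i) \<bullet> (A *\<^sub>v w (m+j)))"
  have B: "B \<in> carrier_mat k k" unfolding B_def by simp
  have Bsym: "B $$ (i,j) = B $$ (j,i)" if "i < k" "j < k" for i j
  proof -
    have c: "w (m+i) \<in> carrier_vec n" "w (m+j) \<in> carrier_vec n" using that wc k_def by auto
    have "w (m+i) \<bullet> (A *\<^sub>v w (m+j)) = (A *\<^sub>v w (m+i)) \<bullet> w (m+j)"
      by (rule sym_scalar[OF A sym c])
    also have "\<dots> = w (m+j) \<bullet> (A *\<^sub>v w (m+i))"
      by (rule comm_scalar_prod[of _ n]) (use A c in auto)
    finally show ?thesis unfolding B_def using that by simp
  qed
  obtain mu y where "eigenvector B y mu" using sym_real_eigenvector[OF B k Bsym] by blast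
  then have y: "y \<in> carrier_vec k" "y \<noteq> 0\<^sub>v k" "B *\<^sub>v y = mu \<cdot>\<^sub>v y"
    unfolding eigenvector_def using B by auto
  define x where "x = vec n (\<lambda>i. \<Sum>j\<in>{0..<k}. y $ j * w (m+j) $ i)"
  have xc: "x \<in> carrier_vec n" unfolding x_def by simp
  have wmj: "\<And>j. j \<in> {0..<k} \<Longrightarrow> w (m+j) \<in> carrier_vec n" using wc k_def by auto
  have F1: "w l \<bullet> x = (if m \<le> l then y $ (l - m) else 0)" if l: "l < n" for l
  proof -
    have "w l \<bullet> x = (\<Sum>j\<in>{0..<k}. y $ j * (w l \<bullet> w (m+j)))"
      unfolding x_def by (rule scalar_lincomb[OF wc[OF l] wmj]) auto
    also have "\<dots> = (\<Sum>j\<in>{0..<k}. if j = l - m \<and> m \<le> l then y $ j else 0)"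
      using l wo k_def by (intro sum.cong refl) auto
    also have "\<dots> = (if m \<le> l then y $ (l - m) else 0)"
    proof (cases "m \<le> l")
      case True
      then have "(\<Sum>j\<in>{0..<k}. if j = l - m \<and> m \<le> l then y $ j else 0)
         = (\<Sum>j\<in>{0..<k}. if j = l - m then y $ j else 0)" by simp
      also have "\<dots> = y $ (l - m)" using True l k_def by (simp add: sum.delta)
      finally show ?thesis using True by simp
    qed simp
    finally show ?thesis .
  qed
  have F2: "w l \<bullet> (A *\<^sub>v x) = mu * (w l \<bullet> x)" if l: "l < n" for l
  proof -
    have Awl: "A *\<^sub>v w l \<in> carrier_vec n" using A wc[OF l] by simp
    have "w l \<bullet> (A *\<^sub>v x) = (A *\<^sub>v w l) \<bullet> x" by (rule sym_scalar[OF A sym wc[OF l] xc])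
    also have "\<dots> = (\<Sum>j\<in>{0..<k}. y $ j * ((A *\<^sub>v w l) \<bullet> w (m+j)))"
      unfolding x_def by (rule scalar_lincomb[OF Awl wmj]) auto
    also have "\<dots> = mu * (w l \<bullet> x)"
    proof (cases "m \<le> l")
      case False
      then have "w l = v l" using wv by auto
      then have "A *\<^sub>v w l = lam l \<cdot>\<^sub>v w l" using ev False by simp
      then have "(A *\<^sub>v w l) \<bullet> w (m+j) = 0" if "j \<in> {0..<k}" for j
        using wo[of l "m+j"] that False l k_def wc[of l] wc[of "m+j"]
        by (simp add: scalar_prod_smult_left)
      then show ?thesis using F1[OF l] False by simp
    next
      case True
      have "(A *\<^sub>v w l) \<bullet> w (m+j) = B $$ (l - m, j)" if "j \<in> {0..<k}" for j
      proof -
        have "(A *\<^sub>v w l) \<bullet> w (m+j) = w l \<bullet> (A *\<^sub>v w (m+j))"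
          using sym_scalar[OF A sym wc[OF l] wmj[OF that]] by simp
        then show ?thesis unfolding B_def using that True l k_def by simp
      qed
      then have "(\<Sum>j\<in>{0..<k}. y $ j * ((A *\<^sub>v w l) \<bullet> w (m+j)))
          = (\<Sum>j\<in>{0..<k}. B $$ (l - m, j) * y $ j)" by (simp add: mult.commute)
      also have "\<dots> = (B *\<^sub>v y) $ (l - m)"
        using B y(1) True l k_def by (simp add: scalar_prod_def)
      also have "\<dots> = mu * y $ (l - m)" using y(1,3) True l k_def by simp
      finally show ?thesis using F1[OF l] True by simp
    qed
    finally show ?thesis .
  qed
  have Ax: "A *\<^sub>v x = mu \<cdot>\<^sub>v x"
    by (rule basis_eq[OF won]) (use A xc F2 wc scalar_prod_smult_distrib[OF wc xc] in auto)
  obtain j where j: "j < k" "y $ j \<noteq> 0" using y by (metis carrier_vecD eq_vecI index_zero_vec(1,2))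
  have "w (m+j) \<bullet> x \<noteq> 0" using F1[of "m+j"] j k_def by simp
  then have xnz: "x \<noteq> 0\<^sub>v n" using wmj[of j] j by auto
  define z where "z = (1 / sqrt (x \<bullet> x)) \<cdot>\<^sub>v x"
  note nz = normalize_vec[OF xc xnz, folded z_def]
  have "A *\<^sub>v z = mu \<cdot>\<^sub>v z" unfolding z_def using A xc Ax
    by (simp add: mult_mat_vec smult_smult_assoc mult.commute)
  moreover have "\<forall>k<m. v k \<bullet> z = 0"
  proof (intro allI impI)
    fix l assume "l < m"
    then have "w l \<bullet> x = 0" "w l = v l" using F1[of l] mn wv by auto
    then show "v l \<bullet> z = 0" using nz(3) wc[of l] \<open>l < m\<close> mn by auto
  qed
  ultimately show ?thesis using nz by blast
qed

lemma spectral_family: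
  fixes A :: "real mat"
  assumes A: "A \<in> carrier_mat n n" and sym: "\<And>i j. i < n \<Longrightarrow> j < n \<Longrightarrow> A $$ (i,j) = A $$ (j,i)"
  shows "\<exists>v lam. onset n v {..<n} \<and> (\<forall>k<n. A *\<^sub>v v k = lam k \<cdot>\<^sub>v v k)"
proof -
  have "\<exists>v lam. onset n v {..<m} \<and> (\<forall>k<m. A *\<^sub>v v k = lam k \<cdot>\<^sub>v v k)" if "m \<le> n" for m
    using that
  proof (induction m)
    case 0
    then show ?case unfolding onset_def by auto
  next
    case (Suc m)
    then obtain v lam where on: "onset n v {..<m}" and ev: "\<forall>k<m. A *\<^sub>v v k = lam k \<cdot>\<^sub>v v k" by auto
    have mn: "m < n" using Suc by simp
    obtain z mu where z: "z \<in> carrier_vec n" "z \<bullet> z = 1" "\<forall>k<m. v k \<bullet> z = 0" "A *\<^sub>v z = mu \<cdot>\<^sub>v z"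
      using spectral_step[OF A sym mn on] ev by blast
    have vc: "\<And>k. k < m \<Longrightarrow> v k \<in> carrier_vec n" using on unfolding onset_def by auto
    have zv: "\<And>k. k < m \<Longrightarrow> z \<bullet> v k = 0" using z(3) comm_scalar_prod[OF z(1) vc] by simp
    define v' where "v' = v(m := z)"
    define lam' where "lam' = lam(m := mu)"
    have "onset n v' {..<Suc m}"
      unfolding onset_def
    proof (intro conjI ballI)
      fix k assume "k \<in> {..<Suc m}" then show "v' k \<in> carrier_vec n"
        using vc z(1) unfolding v'_def by (cases "k = m") auto
    next
      fix k l assume kl: "k \<in> {..<Suc m}" "l \<in> {..<Suc m}"
      show "v' k \<bullet> v' l = (if k = l then 1 else 0)"
      proof (cases "k = m")
        case True
        then show ?thesis using kl z(2) zv unfolding v'_def by (cases "l = m") auto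
      next
        case False
        then have "k < m" using kl by auto
        then show ?thesis using kl z(3) on False unfolding v'_def onset_def
          by (cases "l = m") auto
      qed
    qed
    moreover have "\<forall>k<Suc m. A *\<^sub>v v' k = lam' k \<cdot>\<^sub>v v' k"
      using ev z(4) unfolding v'_def lam'_def by (auto simp: less_Suc_eq)
    ultimately show ?case by blast
  qed
  then show ?thesis by blast
qed



lemma svd_exists:
  fixes X :: "real mat"
  assumes X: "X \<in> carrier_mat n n"
  shows "\<exists>U S V. is_svd n X U S V"
proof -
  define A where "A = transpose_mat X * X"
  have A: "A \<in> carrier_mat n n" unfolding A_def using X by simp
  have "transpose_mat A = A" unfolding A_def using X by (simp add: transpose_mult)
  then have Asym: "A $$ (i,j) = A $$ (j,i)" if "i < n" "j < n" for i j
    using that A by (metis carrier_matD(1,2) index_transpose_mat(1))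
  obtain v lam where von: "onset n v {..<n}" and ev: "\<forall>k<n. A *\<^sub>v v k = lam k \<cdot>\<^sub>v v k"
    using spectral_family[OF A Asym] by blast
  have vc: "\<And>k. k < n \<Longrightarrow> v k \<in> carrier_vec n" using von unfolding onset_def by auto
  have vo: "\<And>k l. k < n \<Longrightarrow> l < n \<Longrightarrow> v k \<bullet> v l = (if k = l then 1 else 0)"
    using von unfolding onset_def by auto
  define y where "y = (\<lambda>k. X *\<^sub>v v k)"
  have yc: "\<And>k. k < n \<Longrightarrow> y k \<in> carrier_vec n" unfolding y_def using X vc by auto
  have yo: "y l \<bullet> y k = (if k = l then lam l else 0)" if "k < n" "l < n" for k l
  proof -
    have "(transpose_mat X *\<^sub>v (X *\<^sub>v v l)) \<bullet> v k = (X *\<^sub>v v l) \<bullet> (X *\<^sub>v v k)"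
      by (rule transpose_vec_mult_scalar[OF X vc[OF that(1)]]) (use X vc[OF that(2)] in simp)
    moreover have "transpose_mat X *\<^sub>v (X *\<^sub>v v l) = A *\<^sub>v v l"
      unfolding A_def using X vc[OF that(2)] by (simp add: assoc_mult_mat_vec[of _ n n _ n])
    moreover have "(A *\<^sub>v v l) \<bullet> v k = lam l * (v l \<bullet> v k)"
      using ev that vc[OF that(1)] vc[OF that(2)] by (simp add: scalar_prod_smult_left)
    ultimately show ?thesis unfolding y_def using vo that by auto
  qed
  define sig where "sig = (\<lambda>k. sqrt (y k \<bullet> y k))"
  define K where "K = {k. k < n \<and> sig k > 0}"
  define u where "u = (\<lambda>k. (1 / sig k) \<cdot>\<^sub>v y k)"
  have uon: "onset n u K" unfolding onset_def
  proof (intro conjI ballI)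
    fix k assume "k \<in> K" then show "u k \<in> carrier_vec n" unfolding u_def K_def using yc by auto
  next
    fix k l assume kl: "k \<in> K" "l \<in> K"
    then have kl': "k < n" "l < n" "sig k > 0" "sig l > 0" unfolding K_def by auto
    have "u k \<bullet> u l = (1 / sig k) * ((1 / sig l) * (y k \<bullet> y l))"
      unfolding u_def using yc[OF kl'(1)] yc[OF kl'(2)]
      by (simp add: scalar_prod_smult_left scalar_prod_smult_right)
    also have "\<dots> = (if k = l then 1 else 0)"
    proof (cases "k = l")
      case True
      have "y k \<bullet> y k \<ge> 0" by (rule self_scalar_prod_nonneg)
      then have "sig k * sig k = y k \<bullet> y k" unfolding sig_def by simp
      then show ?thesis using True kl'
        by (metis div_self mult_1 mult_pos_pos order_less_irrefl times_divide_eq_left)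
    next
      case False
      then show ?thesis using yo[of l k] kl' by simp
    qed
    finally show "u k \<bullet> u l = (if k = l then 1 else 0)" .
  qed
  obtain u' where u'K: "\<forall>k\<in>K. u' k = u k" and u'on: "onset n u' {..<n}"
    using onb_complete[of K n u] uon unfolding K_def by auto
  have u'c: "\<And>k. k < n \<Longrightarrow> u' k \<in> carrier_vec n" using u'on unfolding onset_def by auto
  have yk: "y k = sig k \<cdot>\<^sub>v u' k" if k: "k < n" for k
  proof (cases "k \<in> K")
    case True
    then have "sig k > 0" unfolding K_def by auto
    then show ?thesis using u'K True unfolding u_def by (auto simp: smult_smult_assoc)
  next
    case False
    then have "sig k = 0" unfolding K_def sig_def using k self_scalar_prod_nonneg[of "y k"] by auto
    then have "y k \<bullet> y k = 0" unfolding sig_def using self_scalar_prod_nonneg[of "y k"] by simp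
    then have "y k = 0\<^sub>v n" using self_scalar_prod_pos[OF yc[OF k]] by fastforce
    then show ?thesis using \<open>sig k = 0\<close> u'c[OF k] by auto
  qed
  define U where "U = colmat n u'"
  define V where "V = colmat n v"
  define S where "S = mat n n (\<lambda>(i,j). if i = j then sig i else 0)"
  have U: "U \<in> carrier_mat n n" and V: "V \<in> carrier_mat n n" and S: "S \<in> carrier_mat n n"
    unfolding U_def V_def S_def by auto
  have UU: "transpose_mat U * U = 1\<^sub>m n" unfolding U_def by (rule colmat_orth[OF u'on])
  have VV: "transpose_mat V * V = 1\<^sub>m n" unfolding V_def by (rule colmat_orth[OF von])
  have VV2: "V * transpose_mat V = 1\<^sub>m n" unfolding V_def by (rule colmat_orth2[OF von])
  have XV: "X * V = U * S"
  proof (rule eq_matI)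
    fix i k assume ik: "i < dim_row (U * S)" "k < dim_col (U * S)"
    then have ik': "i < n" "k < n" using U S by auto
    have "(X * V) $$ (i,k) = y k $ i"
      unfolding y_def V_def using X ik' col_colmat[of k n v] vc[OF ik'(2)] by simp
    also have "\<dots> = sig k * u' k $ i" using yk[OF ik'(2)] u'c[OF ik'(2)] ik' by simp
    also have "\<dots> = (\<Sum>j\<in>{0..<n}. U $$ (i,j) * S $$ (j,k))"
    proof -
      have "(\<Sum>j\<in>{0..<n}. U $$ (i,j) * S $$ (j,k)) = (\<Sum>j\<in>{0..<n}. if j = k then U $$ (i,k) * sig k else 0)"
        unfolding S_def using ik' by (intro sum.cong refl) auto
      also have "\<dots> = U $$ (i,k) * sig k" using ik' by (simp add: sum.delta)
      finally show ?thesis unfolding U_def colmat_def using ik' by simp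
    qed
    also have "\<dots> = (U * S) $$ (i,k)" using U S ik' by (simp add: scalar_prod_def)
    finally show "(X * V) $$ (i,k) = (U * S) $$ (i,k)" .
  qed (use X V U S in auto)
  have "X = X * (V * transpose_mat V)" using VV2 X by simp
  also have "\<dots> = (X * V) * transpose_mat V" using X V by (simp add: assoc_mult_mat[of _ n n _ n _ n])
  also have "\<dots> = U * S * transpose_mat V" using XV by simp
  finally have XUSV: "X = U * S * transpose_mat V" .
  have "diagonal_mat S" unfolding S_def diagonal_mat_def by auto
  moreover have "\<forall>i<n. S $$ (i,i) \<ge> 0" unfolding S_def sig_def using self_scalar_prod_nonneg by auto
  ultimately show ?thesis unfolding is_svd_def using X U S V UU VV XUSV by blast
qed



definition blk :: "nat \<Rightarrow> nat \<Rightarrow> (nat \<Rightarrow> real) \<Rightarrow> (nat \<Rightarrow> nat \<Rightarrow> real) \<Rightarrow> real mat" where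
  "blk C M c d = mat (C*M) (C*M) (\<lambda>(r,s). (if r = s then c (r div C) else 0) + d (r div C) (s div C))"

lemma Qmat_blk: "Qmat C M a b = blk C M a b"
  unfolding Qmat_def blk_def by simp

lemma blk_carrier[simp]: "blk C M c d \<in> carrier_mat (C*M) (C*M)"
  unfolding blk_def by simp

lemma blk_index: "r < C*M \<Longrightarrow> s < C*M \<Longrightarrow>
  blk C M c d $$ (r,s) = (if r = s then c (r div C) else 0) + d (r div C) (s div C)"
  unfolding blk_def by simp

lemma div_lt: "(r::nat) < C*M \<Longrightarrow> r div C < M"
  using less_mult_imp_div_less[of r M C] by (simp add: mult.commute)

lemma sum_div:
  fixes f :: "nat \<Rightarrow> real"
  shows "(\<Sum>t\<in>{0..<C*M}. f (t div C)) = real C * (\<Sum>k\<in>{0..<M}. f k)"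
proof (induction M)
  case 0
  then show ?case by simp
next
  case (Suc M)
  have "(\<Sum>t\<in>{0..<C*Suc M}. f (t div C)) = (\<Sum>t\<in>{0..<C*M}. f (t div C)) + (\<Sum>t\<in>{C*M..<C*M+C}. f (t div C))"
    using sum.atLeastLessThan_concat[of 0 "C*M" "C*M+C" "\<lambda>t. f (t div C)"] by (simp add: algebra_simps)
  also have "(\<Sum>t\<in>{C*M..<C*M+C}. f (t div C)) = (\<Sum>t\<in>{C*M..<C*M+C}. f M)"
  proof (rule sum.cong[OF refl])
    fix t assume "t \<in> {C*M..<C*M+C}"
    then have "t div C = M" by (intro div_nat_eqI) (auto simp: mult.commute)
    then show "f (t div C) = f M" by simp
  qed
  also have "\<dots> = real C * f M" by simp
  finally show ?case using Suc by (simp add: algebra_simps)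
qed

lemma blk_mult:
  "blk C M c d * blk C M c' d' = blk C M (\<lambda>i. c i * c' i)
     (\<lambda>i j. c i * d' i j + d i j * c' j + real C * (\<Sum>k\<in>{0..<M}. d i k * d' k j))"
proof (rule eq_matI)
  fix r s assume rs: "r < dim_row (blk C M (\<lambda>i. c i * c' i)
     (\<lambda>i j. c i * d' i j + d i j * c' j + real C * (\<Sum>k\<in>{0..<M}. d i k * d' k j)))"
    "s < dim_col (blk C M (\<lambda>i. c i * c' i)
     (\<lambda>i j. c i * d' i j + d i j * c' j + real C * (\<Sum>k\<in>{0..<M}. d i k * d' k j)))"
  then have r: "r < C*M" and s: "s < C*M" by (auto simp: blk_def)
  let ?n = "C*M"
  define i where "i = r div C"
  define j where "j = s div C"
  have "(blk C M c d * blk C M c' d') $$ (r,s) =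
     (\<Sum>t\<in>{0..<?n}. blk C M c d $$ (r,t) * blk C M c' d' $$ (t,s))"
    using r s by (simp add: blk_def scalar_prod_def)
  also have "\<dots> = (\<Sum>t\<in>{0..<?n}.
       (if t = r then (if r = s then c i * c' i else 0) else 0)
     + (if t = r then c i * d' (t div C) j else 0)
     + (if t = s then d i j * c' j else 0)
     + d i (t div C) * d' (t div C) j)"
    by (intro sum.cong refl) (auto simp: blk_index r s i_def j_def algebra_simps)
  also have "\<dots> = (if r = s then c i * c' i else 0) + c i * d' i j + d i j * c' j
      + (\<Sum>t\<in>{0..<?n}. d i (t div C) * d' (t div C) j)"
    using r s by (simp add: sum.distrib sum.delta i_def)
  also have "(\<Sum>t\<in>{0..<?n}. d i (t div C) * d' (t div C) j) = real C * (\<Sum>k\<in>{0..<M}. d i k * d' k j)"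
    by (rule sum_div)
  finally show "(blk C M c d * blk C M c' d') $$ (r,s) = blk C M (\<lambda>i. c i * c' i)
     (\<lambda>i j. c i * d' i j + d i j * c' j + real C * (\<Sum>k\<in>{0..<M}. d i k * d' k j)) $$ (r,s)"
    using r s by (simp add: blk_index i_def j_def)
qed (auto simp: blk_def)

lemma blk_add: "blk C M c d + blk C M c' d' = blk C M (\<lambda>i. c i + c' i) (\<lambda>i j. d i j + d' i j)"
  by (rule eq_matI) (auto simp: blk_def)

lemma blk_smult: "a \<cdot>\<^sub>m blk C M c d = blk C M (\<lambda>i. a * c i) (\<lambda>i j. a * d i j)"
  by (rule eq_matI) (auto simp: blk_def algebra_simps)

lemma blk_transpose: "transpose_mat (blk C M c d) = blk C M c (\<lambda>i j. d j i)"
  by (rule eq_matI) (auto simp: blk_def)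

lemma blk_one: "1\<^sub>m (C*M) = blk C M (\<lambda>_. 1) (\<lambda>_ _. 0)"
  by (rule eq_matI) (auto simp: blk_def)

definition inA :: "nat \<Rightarrow> nat \<Rightarrow> real mat \<Rightarrow> bool" where
  "inA C M Z \<longleftrightarrow> (\<exists>c d. Z = blk C M c d)"

lemma inA_mult: "inA C M X \<Longrightarrow> inA C M Y \<Longrightarrow> inA C M (X * Y)"
  unfolding inA_def using blk_mult by blast

lemma inA_add: "inA C M X \<Longrightarrow> inA C M Y \<Longrightarrow> inA C M (X + Y)"
  unfolding inA_def using blk_add by blast

lemma inA_smult: "inA C M X \<Longrightarrow> inA C M (a \<cdot>\<^sub>m X)"
  unfolding inA_def using blk_smult by blast

lemma inA_transpose: "inA C M X \<Longrightarrow> inA C M (transpose_mat X)"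
  unfolding inA_def using blk_transpose by blast

lemma inA_one: "inA C M (1\<^sub>m (C*M))"
  unfolding inA_def using blk_one by blast

lemma inA_blk: "inA C M (blk C M c d)"
  unfolding inA_def by blast



definition diagm :: "nat \<Rightarrow> (nat \<Rightarrow> real) \<Rightarrow> real mat" where
  "diagm n g = mat n n (\<lambda>(i,j). if i = j then g i else 0)"

lemma diagm_carrier[simp]: "diagm n g \<in> carrier_mat n n"
  unfolding diagm_def by simp

lemma diagm_mult: "diagm n g * diagm n h = diagm n (\<lambda>k. g k * h k)"
proof (rule eq_matI)
  fix i j assume ij: "i < dim_row (diagm n (\<lambda>k. g k * h k))" "j < dim_col (diagm n (\<lambda>k. g k * h k))"
  then have ij': "i < n" "j < n" unfolding diagm_def by auto
  have "(diagm n g * diagm n h) $$ (i,j) = (\<Sum>t\<in>{0..<n}. (if i = t then g i else 0) * (if t = j then h t else 0))"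
    using ij' by (simp add: diagm_def scalar_prod_def)
  also have "\<dots> = (\<Sum>t\<in>{0..<n}. if t = i then (if i = j then g i * h i else 0) else 0)"
    by (intro sum.cong refl) auto
  also have "\<dots> = diagm n (\<lambda>k. g k * h k) $$ (i,j)" using ij' by (simp add: sum.delta diagm_def)
  finally show "(diagm n g * diagm n h) $$ (i,j) = diagm n (\<lambda>k. g k * h k) $$ (i,j)" .
qed (auto simp: diagm_def)

lemma diagm_add: "diagm n g + diagm n h = diagm n (\<lambda>k. g k + h k)"
  by (rule eq_matI) (auto simp: diagm_def)

lemma diagm_smult: "a \<cdot>\<^sub>m diagm n g = diagm n (\<lambda>k. a * g k)"
  by (rule eq_matI) (auto simp: diagm_def)

lemma diagm_one: "diagm n (\<lambda>_. 1) = 1\<^sub>m n"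
  by (rule eq_matI) (auto simp: diagm_def)

lemma diagm_transpose: "transpose_mat (diagm n g) = diagm n g"
  by (rule eq_matI) (auto simp: diagm_def)

lemma diag_is_diagm:
  assumes "diagonal_mat S" "S \<in> carrier_mat n n"
  shows "S = diagm n (\<lambda>k. S $$ (k,k))"
  by (rule eq_matI) (use assms in \<open>auto simp: diagm_def diagonal_mat_def\<close>)

lemma map_sgn_diagm: "map_mat sgn (diagm n g) = diagm n (\<lambda>k. sgn (g k))"
  by (rule eq_matI) (auto simp: diagm_def)

definition W :: "nat \<Rightarrow> real mat \<Rightarrow> (nat \<Rightarrow> real) \<Rightarrow> real mat" where
  "W n V g = V * diagm n g * transpose_mat V"

context
  fixes n :: nat and V :: "real mat"
  assumes V: "V \<in> carrier_mat n n" and VV: "transpose_mat V * V = 1\<^sub>m n"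
begin

lemma W_carrier[simp]: "W n V g \<in> carrier_mat n n"
  unfolding W_def using V by (intro mult_carrier_mat[of _ n n _ n]) auto

lemma VV2: "V * transpose_mat V = 1\<^sub>m n"
  by (rule orth_square[OF V VV])

lemma W_mult: "W n V g * W n V h = W n V (\<lambda>k. g k * h k)"
proof -
  define D where "D = diagm n g"
  define E where "E = diagm n h"
  define T where "T = transpose_mat V"
  have c: "D \<in> carrier_mat n n" "E \<in> carrier_mat n n" "T \<in> carrier_mat n n"
    unfolding D_def E_def T_def using V by auto
  have VD: "V * D \<in> carrier_mat n n" using V c by auto
  have VE: "V * E \<in> carrier_mat n n" using V c by auto
  have VDT: "V * D * T \<in> carrier_mat n n" using VD c by auto
  have "W n V g * W n V h = (V * D * T) * ((V * E) * T)" unfolding W_def D_def E_def T_def by simp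
  also have "\<dots> = ((V * D * T) * (V * E)) * T" by (rule assoc_mult_mat[OF VDT VE c(3), symmetric])
  also have "(V * D * T) * (V * E) = ((V * D * T) * V) * E" by (rule assoc_mult_mat[OF VDT V c(2), symmetric])
  also have "(V * D * T) * V = (V * D) * (T * V)" by (rule assoc_mult_mat[OF VD c(3) V])
  also have "T * V = 1\<^sub>m n" unfolding T_def by (rule VV)
  also have "(V * D) * 1\<^sub>m n = V * D" by (rule right_mult_one_mat[OF VD])
  also have "V * D * E = V * (D * E)" by (rule assoc_mult_mat[OF V c(1,2)])
  finally show ?thesis unfolding W_def D_def E_def T_def diagm_mult .
qed

lemma W_add: "W n V g + W n V h = W n V (\<lambda>k. g k + h k)"
proof -
  have Vt: "transpose_mat V \<in> carrier_mat n n" using V by simp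
  have "W n V g + W n V h = (V * diagm n g + V * diagm n h) * transpose_mat V"
    unfolding W_def using V Vt by (intro add_mult_distrib_mat[of _ n n _ _ n, symmetric]) auto
  also have "V * diagm n g + V * diagm n h = V * (diagm n g + diagm n h)"
    using V by (intro mult_add_distrib_mat[of _ n n _ n, symmetric]) auto
  finally show ?thesis unfolding W_def diagm_add .
qed

lemma W_smult: "a \<cdot>\<^sub>m W n V g = W n V (\<lambda>k. a * g k)"
proof -
  have Vt: "transpose_mat V \<in> carrier_mat n n" using V by simp
  have "V * (a \<cdot>\<^sub>m diagm n g) * transpose_mat V = (a \<cdot>\<^sub>m (V * diagm n g)) * transpose_mat V"
    by (simp add: mult_smult_distrib[OF V diagm_carrier])
  also have "\<dots> = a \<cdot>\<^sub>m (V * diagm n g * transpose_mat V)"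
    using V Vt by (intro mult_smult_assoc_mat[of _ n n]) auto
  finally show ?thesis unfolding diagm_smult[symmetric] W_def by simp
qed

lemma W_one: "W n V (\<lambda>_. 1) = 1\<^sub>m n"
  unfolding W_def diagm_one using V VV2 by simp

end



lemma interp_closure:
  fixes P :: "(nat \<Rightarrow> real) \<Rightarrow> bool" and tau :: "nat \<Rightarrow> real"
  assumes one: "P (\<lambda>_. 1)" and tau: "P tau"
    and mult: "\<And>g h. P g \<Longrightarrow> P h \<Longrightarrow> P (\<lambda>k. g k * h k)"
    and add: "\<And>g h. P g \<Longrightarrow> P h \<Longrightarrow> P (\<lambda>k. g k + h k)"
    and smult: "\<And>g a. P g \<Longrightarrow> P (\<lambda>k. a * g k)"
  shows "\<exists>g. P g \<and> (\<forall>k<n. g k = f (tau k))"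
proof -
  have zero: "P (\<lambda>_. 0)" using smult[OF one, of 0] by simp
  have prodP: "P (\<lambda>k. \<Prod>t\<in>F. h t k)" if "finite F" "\<And>t. t \<in> F \<Longrightarrow> P (h t)" for F h
    using that
  proof (induction F rule: finite_induct)
    case empty then show ?case using one by simp
  next
    case (insert x F)
    then have "P (\<lambda>k. h x k * (\<Prod>t\<in>F. h t k))" by (intro mult) auto
    then show ?case using insert by simp
  qed
  have sumP: "P (\<lambda>k. \<Sum>t\<in>F. h t k)" if "finite F" "\<And>t. t \<in> F \<Longrightarrow> P (h t)" for F h
    using that
  proof (induction F rule: finite_induct)
    case empty then show ?case using zero by simp
  next
    case (insert x F)
    then have "P (\<lambda>k. h x k + (\<Sum>t\<in>F. h t k))" by (intro add) auto
    then show ?case using insert by simp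
  qed
  define T where "T = tau ` {0..<n}"
  have fT: "finite T" unfolding T_def by simp
  define e where "e = (\<lambda>t0 k. \<Prod>t\<in>T-{t0}. (tau k - t) / (t0 - t))"
  have Pe: "P (e t0)" for t0
  proof -
    have "P (\<lambda>k. (\<Prod>t\<in>T-{t0}. (tau k - t) / (t0 - t)))"
    proof (rule prodP)
      fix t assume t: "t \<in> T - {t0}"
      have "P (\<lambda>k. (1 / (t0 - t)) * tau k + (- t / (t0 - t)) * 1)"
        by (intro add smult tau one)
      moreover have "(\<lambda>k. (1 / (t0 - t)) * tau k + (- t / (t0 - t)) * 1) = (\<lambda>k. (tau k - t) / (t0 - t))"
        by (simp add: diff_divide_distrib)
      ultimately show "P (\<lambda>k. (tau k - t) / (t0 - t))" by simp
    qed (use fT in simp)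
    then show ?thesis unfolding e_def .
  qed
  define g where "g = (\<lambda>k. \<Sum>t0\<in>T. f t0 * e t0 k)"
  have Pg: "P g" unfolding g_def by (rule sumP[OF fT]) (intro smult Pe)
  have "g k = f (tau k)" if k: "k < n" for k
  proof -
    have tk: "tau k \<in> T" unfolding T_def using k by auto
    have "e t0 k = (if t0 = tau k then 1 else 0)" if t0: "t0 \<in> T" for t0
    proof (cases "t0 = tau k")
      case True
      then have "e t0 k = (\<Prod>t\<in>T-{t0}. 1)" unfolding e_def by (intro prod.cong refl) auto
      then show ?thesis using True by simp
    next
      case False
      then have "tau k \<in> T - {t0}" using tk by auto
      then have "e t0 k = 0" unfolding e_def using fT by (intro prod_zero) auto
      then show ?thesis using False by simp
    qed
    then have "g k = (\<Sum>t0\<in>T. if t0 = tau k then f t0 else 0)" unfolding g_def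
      by (intro sum.cong refl) auto
    also have "\<dots> = f (tau k)" using fT tk by (simp add: sum.delta)
    finally show ?thesis .
  qed
  then show ?thesis using Pg by blast
qed

lemma diagm_mult_vec:
  assumes "w \<in> carrier_vec n" "k < n"
  shows "(diagm n g *\<^sub>v w) $ k = g k * w $ k"
proof -
  have "(diagm n g *\<^sub>v w) $ k = (\<Sum>j\<in>{0..<n}. (if k = j then g k else 0) * w $ j)"
    using assms by (simp add: diagm_def scalar_prod_def)
  also have "\<dots> = (\<Sum>j\<in>{0..<n}. if j = k then g k * w $ k else 0)" by (intro sum.cong refl) auto
  also have "\<dots> = g k * w $ k" using assms by (simp add: sum.delta)
  finally show ?thesis .
qed

definition sigf :: "real mat \<Rightarrow> nat \<Rightarrow> real" where "sigf S k = S $$ (k,k)"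

context
  fixes C M :: nat and a b U S V
  assumes svd: "is_svd (C*M) (blk C M a b) U S V"
begin

abbreviation "nn \<equiv> C*M"
abbreviation "QQ \<equiv> blk C M a b"

lemma svdU: "U \<in> carrier_mat nn nn" and svdS: "S \<in> carrier_mat nn nn" and svdV: "V \<in> carrier_mat nn nn"
  and svdUU: "transpose_mat U * U = 1\<^sub>m nn" and svdVV: "transpose_mat V * V = 1\<^sub>m nn"
  and svdQ: "QQ = U * S * transpose_mat V" and svdSd: "diagonal_mat S" and svdSp: "\<forall>i<nn. S $$ (i,i) \<ge> 0"
  using svd unfolding is_svd_def by auto

lemma S_diagm: "S = diagm nn (sigf S)"
  unfolding sigf_def by (rule diag_is_diagm[OF svdSd svdS])

lemma QtQ: "transpose_mat QQ * QQ = W nn V (\<lambda>k. sigf S k * sigf S k)"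
proof -
  define s where "s = sigf S"
  have S_eq: "S = diagm nn s" unfolding s_def by (rule S_diagm)
  define T where "T = transpose_mat V"
  have T: "T \<in> carrier_mat nn nn" unfolding T_def using svdV by simp
  have Ut: "transpose_mat U \<in> carrier_mat nn nn" using svdU by simp
  have VS: "V * S \<in> carrier_mat nn nn" using svdV svdS by simp
  have ST: "S * T \<in> carrier_mat nn nn" using svdS T by simp
  have St: "transpose_mat S = S" unfolding S_eq diagm_transpose ..
  have Q1: "QQ = U * (S * T)" unfolding svdQ T_def[symmetric] by (rule assoc_mult_mat[OF svdU svdS T])
  have "transpose_mat QQ = transpose_mat (S * T) * transpose_mat U"
    unfolding Q1 by (rule transpose_mult[OF svdU ST])
  also have "transpose_mat (S * T) = transpose_mat T * transpose_mat S" by (rule transpose_mult[OF svdS T])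
  also have "\<dots> = V * S" unfolding T_def St by simp
  finally have Qt: "transpose_mat QQ = V * S * transpose_mat U" .
  have "transpose_mat QQ * QQ = (V * S * transpose_mat U) * (U * (S * T))"
    by (subst Qt, subst Q1, rule refl)
  also have "\<dots> = (V * S) * (transpose_mat U * (U * (S * T)))"
    by (rule assoc_mult_mat[OF VS Ut mult_carrier_mat[OF svdU ST]])
  also have "transpose_mat U * (U * (S * T)) = (transpose_mat U * U) * (S * T)"
    by (rule assoc_mult_mat[OF Ut svdU ST, symmetric])
  also have "\<dots> = S * T" unfolding svdUU by (rule left_mult_one_mat[OF ST])
  also have "(V * S) * (S * T) = V * (S * (S * T))" by (rule assoc_mult_mat[OF svdV svdS ST])
  also have "S * (S * T) = (S * S) * T" by (rule assoc_mult_mat[OF svdS svdS T, symmetric])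
  also have "V * ((S * S) * T) = V * (S * S) * T" using svdV svdS T by (simp add: assoc_mult_mat[of _ nn nn _ nn _ nn])
  also have "S * S = diagm nn (\<lambda>k. s k * s k)" unfolding S_eq diagm_mult ..
  finally show ?thesis unfolding W_def T_def s_def .
qed

definition gg where "gg = (SOME g. inA C M (W nn V g) \<and> (\<forall>k<nn. g k = 1 / sqrt (sigf S k * sigf S k)))"

lemma gg: "inA C M (W nn V gg)" "\<And>k. k < nn \<Longrightarrow> gg k = 1 / sqrt (sigf S k * sigf S k)"
proof -
  let ?P = "\<lambda>g. inA C M (W nn V g)"
  have "\<exists>g. ?P g \<and> (\<forall>k<nn. g k = 1 / sqrt (sigf S k * sigf S k))"
  proof (rule interp_closure[of ?P "\<lambda>k. sigf S k * sigf S k" nn "\<lambda>t. 1 / sqrt t"])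
    show "?P (\<lambda>_. 1)" using W_one[OF svdV svdVV] inA_one by simp
    show "?P (\<lambda>k. sigf S k * sigf S k)" using QtQ inA_mult[OF inA_transpose[OF inA_blk] inA_blk] by metis
    show "?P (\<lambda>k. g k * h k)" if "?P g" "?P h" for g h
      using inA_mult[OF that] W_mult[OF svdV svdVV] by metis
    show "?P (\<lambda>k. g k + h k)" if "?P g" "?P h" for g h
      using inA_add[OF that] W_add[OF svdV svdVV] by metis
    show "?P (\<lambda>k. c * g k)" if "?P g" for g c
      using inA_smult[OF that] W_smult[OF svdV svdVV] by metis
  qed
  then have "\<exists>g. ?P g \<and> (\<forall>k<nn. g k = 1 / sqrt (sigf S k * sigf S k))" .
  from someI_ex[OF this] show "inA C M (W nn V gg)" "\<And>k. k < nn \<Longrightarrow> gg k = 1 / sqrt (sigf S k * sigf S k)"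
    unfolding gg_def by auto
qed

lemma Y_eq: "U * map_mat sgn S * transpose_mat V = QQ * W nn V gg"
proof -
  define s where "s = sigf S"
  have S_eq: "S = diagm nn s" unfolding s_def by (rule S_diagm)
  define T where "T = transpose_mat V"
  define D where "D = diagm nn gg"
  have T: "T \<in> carrier_mat nn nn" unfolding T_def using svdV by simp
  have D: "D \<in> carrier_mat nn nn" unfolding D_def by simp
  have US: "U * S \<in> carrier_mat nn nn" using svdU svdS by simp
  have UST: "U * S * T \<in> carrier_mat nn nn" using US T by simp
  have VD: "V * D \<in> carrier_mat nn nn" using svdV D by simp
  have "QQ * W nn V gg = (U * S * T) * ((V * D) * T)" unfolding svdQ W_def T_def D_def ..
  also have "\<dots> = ((U * S * T) * (V * D)) * T" by (rule assoc_mult_mat[OF UST VD T, symmetric])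
  also have "(U * S * T) * (V * D) = (U * S) * (T * (V * D))" by (rule assoc_mult_mat[OF US T VD])
  also have "T * (V * D) = (T * V) * D" by (rule assoc_mult_mat[OF T svdV D, symmetric])
  also have "\<dots> = D" unfolding T_def svdVV by (rule left_mult_one_mat[OF D])
  also have "(U * S) * D = U * (S * D)" by (rule assoc_mult_mat[OF svdU svdS D])
  also have "S * D = map_mat sgn S"
  proof -
    have "S * D = diagm nn (\<lambda>k. s k * gg k)" unfolding S_eq D_def diagm_mult ..
    also have "\<dots> = diagm nn (\<lambda>k. sgn (s k))"
    proof (rule eq_matI)
      fix i j assume "i < dim_row (diagm nn (\<lambda>k. sgn (s k)))" "j < dim_col (diagm nn (\<lambda>k. sgn (s k)))"
      then have ij: "i < nn" "j < nn" unfolding diagm_def by auto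
      have "s i \<ge> 0" using svdSp ij unfolding s_def sigf_def by auto
      then have "s i * gg i = sgn (s i)" using gg(2)[OF ij(1)] unfolding s_def by (auto simp: sgn_if)
      then show "diagm nn (\<lambda>k. s k * gg k) $$ (i,j) = diagm nn (\<lambda>k. sgn (s k)) $$ (i,j)"
        using ij unfolding diagm_def by auto
    qed (auto simp: diagm_def)
    also have "\<dots> = map_mat sgn S" unfolding S_eq map_sgn_diagm ..
    finally show ?thesis .
  qed
  finally show ?thesis unfolding T_def using svdU svdS svdV
    by (simp add: assoc_mult_mat[of _ nn nn _ nn _ nn])
qed

lemma Y_inA: "inA C M (U * map_mat sgn S * transpose_mat V)"
  unfolding Y_eq by (rule inA_mult[OF inA_blk gg(1)])

end



lemma diagm_dims[simp]: "dim_row (diagm n g) = n" "dim_col (diagm n g) = n"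
  unfolding diagm_def by simp_all

lemma orth_vec_norm:
  fixes U :: "real mat"
  assumes U: "U \<in> carrier_mat n n" and UU: "transpose_mat U * U = 1\<^sub>m n" and p: "p \<in> carrier_vec n"
  shows "(U *\<^sub>v p) \<bullet> (U *\<^sub>v p) = p \<bullet> p"
proof -
  have Up: "U *\<^sub>v p \<in> carrier_vec n" using U p by simp
  have "(transpose_mat U *\<^sub>v (U *\<^sub>v p)) \<bullet> p = (U *\<^sub>v p) \<bullet> (U *\<^sub>v p)"
    by (rule transpose_vec_mult_scalar[OF U p Up])
  moreover have "transpose_mat U *\<^sub>v (U *\<^sub>v p) = p"
  proof -
    have "transpose_mat U *\<^sub>v (U *\<^sub>v p) = (transpose_mat U * U) *\<^sub>v p"
      by (rule assoc_mult_mat_vec[symmetric]) (use U p in auto)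
    then show ?thesis using UU p by simp
  qed
  ultimately show ?thesis by simp
qed

context
  fixes C M :: nat and a b U S V
  assumes svd: "is_svd (C*M) (blk C M a b) U S V"
begin

lemma Y_norm:
  assumes x: "x \<in> carrier_vec (C*M)"
  shows "((U * map_mat sgn S * transpose_mat V) *\<^sub>v x) \<bullet> ((U * map_mat sgn S * transpose_mat V) *\<^sub>v x) \<le> x \<bullet> x"
proof -
  let ?n = "C*M"
  note U = svdU[OF svd] and S = svdS[OF svd] and V = svdV[OF svd]
  define G where "G = map_mat sgn S"
  define T where "T = transpose_mat V"
  define z where "z = T *\<^sub>v x"
  have G: "G \<in> carrier_mat ?n ?n" unfolding G_def using S by simp
  have T: "T \<in> carrier_mat ?n ?n" unfolding T_def using V by simp
  have z: "z \<in> carrier_vec ?n" unfolding z_def using T x by simp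
  have Gz: "G *\<^sub>v z \<in> carrier_vec ?n" using G z by simp
  have "(U * G * T) *\<^sub>v x = (U * G) *\<^sub>v (T *\<^sub>v x)"
    by (rule assoc_mult_mat_vec[OF mult_carrier_mat[OF U G] T x])
  also have "\<dots> = U *\<^sub>v (G *\<^sub>v z)" unfolding z_def by (rule assoc_mult_mat_vec[OF U G mult_mat_vec_carrier[OF T x]])
  finally have Yx: "(U * G * T) *\<^sub>v x = U *\<^sub>v (G *\<^sub>v z)" .
  have "(U *\<^sub>v (G *\<^sub>v z)) \<bullet> (U *\<^sub>v (G *\<^sub>v z)) = (G *\<^sub>v z) \<bullet> (G *\<^sub>v z)"
    by (rule orth_vec_norm[OF U svdUU[OF svd] Gz])
  also have "\<dots> \<le> z \<bullet> z"
  proof -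
    define s where "s = sigf S"
    have S_eq: "S = diagm ?n s" unfolding s_def by (rule S_diagm[OF svd])
    have GD: "G = diagm ?n (\<lambda>k. sgn (s k))" unfolding G_def S_eq map_sgn_diagm ..
    have Gzk: "\<And>k. k < ?n \<Longrightarrow> (G *\<^sub>v z) $ k = sgn (s k) * z $ k"
      unfolding GD using diagm_mult_vec[OF z] by blast
    have "(G *\<^sub>v z) \<bullet> (G *\<^sub>v z) = (\<Sum>k\<in>{0..<?n}. (G *\<^sub>v z) $ k * (G *\<^sub>v z) $ k)"
      using Gz by (simp only: scalar_prod_def carrier_vecD)
    also have "\<dots> = (\<Sum>k\<in>{0..<?n}. (sgn (s k) * z $ k) * (sgn (s k) * z $ k))"
      using Gzk by (intro sum.cong) auto
    also have "\<dots> \<le> (\<Sum>k\<in>{0..<?n}. z $ k * z $ k)"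
    proof (rule sum_mono)
      fix k
      have "(sgn (s k) * z $ k) * (sgn (s k) * z $ k) = (sgn (s k) * sgn (s k)) * (z $ k * z $ k)" by simp
      also have "\<dots> \<le> 1 * (z $ k * z $ k)"
        by (intro mult_right_mono) (auto simp: sgn_if)
      finally show "(sgn (s k) * z $ k) * (sgn (s k) * z $ k) \<le> z $ k * z $ k" by simp
    qed
    also have "\<dots> = z \<bullet> z" using z by (simp add: scalar_prod_def)
    finally show ?thesis .
  qed
  also have "z \<bullet> z = x \<bullet> x"
  proof -
    have "(transpose_mat T *\<^sub>v z) \<bullet> x = z \<bullet> (T *\<^sub>v x)" by (rule transpose_vec_mult_scalar[OF T x z])
    moreover have "transpose_mat T *\<^sub>v z = x"
    proof -
      have "transpose_mat T *\<^sub>v z = V *\<^sub>v (T *\<^sub>v x)" unfolding T_def z_def by simp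
      also have "\<dots> = (V * T) *\<^sub>v x" by (rule assoc_mult_mat_vec[OF V T x, symmetric])
      also have "V * T = 1\<^sub>m ?n" unfolding T_def by (rule VV2[OF V svdVV[OF svd]])
      finally show ?thesis using x by simp
    qed
    ultimately show ?thesis unfolding z_def by simp
  qed
  finally show ?thesis using Yx unfolding G_def T_def by simp
qed

lemma Y_eigen:
  assumes v: "v \<in> carrier_vec (C*M)" and Qv: "blk C M a b *\<^sub>v v = alpha \<cdot>\<^sub>v v"
    and Qtv: "transpose_mat (blk C M a b) *\<^sub>v v = alpha \<cdot>\<^sub>v v"
  shows "(U * map_mat sgn S * transpose_mat V) *\<^sub>v v = sgn alpha \<cdot>\<^sub>v v"
proof -
  let ?n = "C*M"
  let ?Q = "blk C M a b"
  note U = svdU[OF svd] and S = svdS[OF svd] and V = svdV[OF svd]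
  have Q: "?Q \<in> carrier_mat ?n ?n" by simp
  have Qt: "transpose_mat ?Q \<in> carrier_mat ?n ?n" by simp
  define T where "T = transpose_mat V"
  have T: "T \<in> carrier_mat ?n ?n" unfolding T_def using V by simp
  define w where "w = T *\<^sub>v v"
  have w: "w \<in> carrier_vec ?n" unfolding w_def using T v by simp
  define ss where "ss = (\<lambda>k. sigf S k * sigf S k)"
  have VT: "V * T = 1\<^sub>m ?n" unfolding T_def by (rule VV2[OF V svdVV[OF svd]])
  have TV: "T * V = 1\<^sub>m ?n" unfolding T_def by (rule svdVV[OF svd])
  have WV: "W ?n V h *\<^sub>v v = V *\<^sub>v (diagm ?n h *\<^sub>v w)" for h
  proof -
    have "W ?n V h *\<^sub>v v = (V * diagm ?n h) *\<^sub>v (T *\<^sub>v v)" unfolding W_def T_def[symmetric]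
      by (rule assoc_mult_mat_vec[OF mult_carrier_mat[OF V diagm_carrier] T v])
    also have "\<dots> = V *\<^sub>v (diagm ?n h *\<^sub>v w)" unfolding w_def
      by (rule assoc_mult_mat_vec[OF V diagm_carrier mult_mat_vec_carrier[OF T v]])
    finally show ?thesis .
  qed
  have TVp: "T *\<^sub>v (V *\<^sub>v p) = p" if "p \<in> carrier_vec ?n" for p
  proof -
    have "T *\<^sub>v (V *\<^sub>v p) = (T * V) *\<^sub>v p" by (rule assoc_mult_mat_vec[symmetric]) (use T V that in auto)
    then show ?thesis using TV that by simp
  qed
  have "(transpose_mat ?Q * ?Q) *\<^sub>v v = transpose_mat ?Q *\<^sub>v (?Q *\<^sub>v v)"
    by (rule assoc_mult_mat_vec[OF Qt Q v])
  also have "\<dots> = (alpha * alpha) \<cdot>\<^sub>v v" unfolding Qv mult_mat_vec[OF Qt v] Qtv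
    by (simp add: smult_smult_assoc)
  finally have "V *\<^sub>v (diagm ?n ss *\<^sub>v w) = (alpha * alpha) \<cdot>\<^sub>v v"
    unfolding QtQ[OF svd] ss_def WV .
  then have "T *\<^sub>v (V *\<^sub>v (diagm ?n ss *\<^sub>v w)) = T *\<^sub>v ((alpha * alpha) \<cdot>\<^sub>v v)" by simp
  moreover have Dwc: "diagm ?n ss *\<^sub>v w \<in> carrier_vec ?n" by (rule mult_mat_vec_carrier[OF diagm_carrier w])
  ultimately have Dw: "diagm ?n ss *\<^sub>v w = (alpha * alpha) \<cdot>\<^sub>v w"
    unfolding TVp[OF Dwc] mult_mat_vec[OF T v] w_def[symmetric] by blast
  have Dg: "diagm ?n (gg C M S V) *\<^sub>v w = (1 / \<bar>alpha\<bar>) \<cdot>\<^sub>v w"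
  proof (rule eq_vecI)
    fix k assume "k < dim_vec ((1 / \<bar>alpha\<bar>) \<cdot>\<^sub>v w)"
    then have k: "k < ?n" using w by simp
    have e: "ss k * w $ k = (alpha * alpha) * w $ k"
      using arg_cong[OF Dw, of "\<lambda>x. x $ k"] diagm_mult_vec[OF w k] w k by simp
    have "gg C M S V k * w $ k = (1 / \<bar>alpha\<bar>) * w $ k"
    proof (cases "w $ k = 0")
      case False
      then have "ss k = alpha * alpha" using e by simp
      then show ?thesis using gg(2)[OF svd k] unfolding ss_def by (simp add: real_sqrt_mult_self)
    qed simp
    then show "(diagm ?n (gg C M S V) *\<^sub>v w) $ k = ((1 / \<bar>alpha\<bar>) \<cdot>\<^sub>v w) $ k"
      using diagm_mult_vec[OF w k] w k by simp
  qed (use w in simp)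
  have "W ?n V (gg C M S V) *\<^sub>v v = (1 / \<bar>alpha\<bar>) \<cdot>\<^sub>v v"
  proof -
    have "W ?n V (gg C M S V) *\<^sub>v v = (1 / \<bar>alpha\<bar>) \<cdot>\<^sub>v (V *\<^sub>v w)" unfolding WV Dg
      using V w by (simp add: mult_mat_vec)
    also have "V *\<^sub>v w = (V * T) *\<^sub>v v" unfolding w_def by (rule assoc_mult_mat_vec[symmetric]) (use V T v in auto)
    also have "\<dots> = v" using VT v by simp
    finally show ?thesis .
  qed
  then have "(?Q * W ?n V (gg C M S V)) *\<^sub>v v = ?Q *\<^sub>v ((1 / \<bar>alpha\<bar>) \<cdot>\<^sub>v v)"
    by (simp add: assoc_mult_mat_vec[OF Q W_carrier[OF V svdVV[OF svd]] v])
  also have "\<dots> = (1 / \<bar>alpha\<bar>) \<cdot>\<^sub>v (alpha \<cdot>\<^sub>v v)" unfolding mult_mat_vec[OF Q v] Qv ..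
  also have "\<dots> = sgn alpha \<cdot>\<^sub>v v" by (simp add: smult_smult_assoc sgn_if)
  finally show ?thesis unfolding Y_eq[OF svd] .
qed

end



lemma blk_dims[simp]: "dim_row (blk C M c d) = C*M" "dim_col (blk C M c d) = C*M"
  unfolding blk_def by simp_all

lemma sum_two:
  fixes f :: "nat \<Rightarrow> real"
  assumes "p + 1 < n"
  shows "(\<Sum>s\<in>{0..<n}. f s * (if s = p then 1 else if s = p + 1 then -1 else 0)) = f p - f (p + 1)"
proof -
  have "(\<Sum>s\<in>{0..<n}. f s * (if s = p then 1 else if s = p + 1 then -1 else 0))
      = (\<Sum>s\<in>{0..<n}. (if s = p then f p else 0) + (if s = p + 1 then - f (p+1) else 0))"
    by (intro sum.cong refl) auto
  also have "\<dots> = f p - f (p + 1)" using assms by (simp add: sum.distrib sum.delta)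
  finally show ?thesis .
qed

lemma blk_eig:
  assumes C: "C \<ge> 2" and i: "i < M"
  defines "v \<equiv> vec (C*M) (\<lambda>t. if t = i*C then 1 else if t = i*C + 1 then -1 else (0::real))"
  shows "blk C M c d *\<^sub>v v = c i \<cdot>\<^sub>v v"
proof (rule eq_vecI)
  have p: "i*C + 1 < C*M"
  proof -
    have "i*C + 1 < i*C + C" using C by simp
    also have "\<dots> = (i+1)*C" by simp
    also have "\<dots> \<le> M*C" using i by (intro mult_right_mono) auto
    finally show ?thesis by (simp add: mult.commute)
  qed
  have d1: "(i*C) div C = i" using C by simp
  have d2: "(i*C + 1) div C = i" using C by (intro div_nat_eqI) (auto simp: algebra_simps)
  fix t assume "t < dim_vec (c i \<cdot>\<^sub>v v)"
  then have t: "t < C*M" unfolding v_def by simp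
  have "(blk C M c d *\<^sub>v v) $ t = (\<Sum>s\<in>{0..<C*M}. blk C M c d $$ (t,s) * v $ s)"
    using t by (simp add: v_def scalar_prod_def)
  also have "\<dots> = (\<Sum>s\<in>{0..<C*M}. ((if t = s then c (t div C) else 0) + d (t div C) (s div C)) *
      (if s = i*C then 1 else if s = i*C + 1 then -1 else 0))"
    using t by (intro sum.cong refl) (auto simp: blk_index v_def)
  also have "\<dots> = ((if t = i*C then c (t div C) else 0) + d (t div C) ((i*C) div C))
      - ((if t = i*C + 1 then c (t div C) else 0) + d (t div C) ((i*C+1) div C))"
    by (rule sum_two[OF p])
  also have "\<dots> = (c i \<cdot>\<^sub>v v) $ t"
    using t d1 d2 unfolding v_def by auto
  finally show "(blk C M c d *\<^sub>v v) $ t = (c i \<cdot>\<^sub>v v) $ t" .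
qed (simp add: v_def)

lemma c_eq_sgn:
  assumes svd: "is_svd (C*M) (blk C M a b) U S V" and Y: "U * map_mat sgn S * transpose_mat V = blk C M c d"
    and C: "C \<ge> 2" and i: "i < M"
  shows "c i = sgn (a i)"
proof -
  define v where "v = vec (C*M) (\<lambda>t. if t = i*C then 1 else if t = i*C + 1 then -1 else (0::real))"
  have vc: "v \<in> carrier_vec (C*M)" unfolding v_def by simp
  have Qv: "blk C M a b *\<^sub>v v = a i \<cdot>\<^sub>v v" unfolding v_def by (rule blk_eig[OF C i])
  have Qtv: "transpose_mat (blk C M a b) *\<^sub>v v = a i \<cdot>\<^sub>v v" unfolding v_def blk_transpose by (rule blk_eig[OF C i])
  have "blk C M c d *\<^sub>v v = sgn (a i) \<cdot>\<^sub>v v" using Y_eigen[OF svd vc Qv Qtv] Y by simp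
  moreover have "blk C M c d *\<^sub>v v = c i \<cdot>\<^sub>v v" unfolding v_def by (rule blk_eig[OF C i])
  ultimately have "c i \<cdot>\<^sub>v v = sgn (a i) \<cdot>\<^sub>v v" by simp
  then have e: "(c i \<cdot>\<^sub>v v) $ (i*C) = (sgn (a i) \<cdot>\<^sub>v v) $ (i*C)" by simp
  have "i*C < M*C" using i C by simp
  then have iC: "i*C < C*M" by (simp add: mult.commute)
  then have "v $ (i*C) = 1" unfolding v_def by simp
  then show ?thesis using e iC vc by simp
qed

lemma block_bound:
  assumes svd: "is_svd (C*M) (blk C M a b) U S V" and Y: "U * map_mat sgn S * transpose_mat V = blk C M c d"
    and i: "i < M" and j: "j < M" and C1: "C \<ge> 1"
  shows "\<bar>(if i = j then c i else 0) + real C * d i j\<bar> \<le> 1"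
proof -
  let ?n = "C*M"
  define x where "x = vec ?n (\<lambda>s. if s div C = j then 1 else (0::real))"
  have xc: "x \<in> carrier_vec ?n" unfolding x_def by simp
  have C0: "C > 0" using C1 by simp
  have xx: "x \<bullet> x = real C"
  proof -
    have "x \<bullet> x = (\<Sum>s\<in>{0..<?n}. (\<lambda>k. if k = j then 1 else 0) (s div C))"
      unfolding x_def by (auto simp: scalar_prod_def intro!: sum.cong)
    also have "\<dots> = real C * (\<Sum>k\<in>{0..<M}. if k = j then 1 else 0)" by (rule sum_div)
    also have "\<dots> = real C" using j by (simp add: sum.delta)
    finally show ?thesis .
  qed
  define vv where "vv = (if i = j then c i else 0) + real C * d i j"
  have Yx: "(blk C M c d *\<^sub>v x) $ r = (if r div C = j then c (r div C) else 0) + real C * d (r div C) j"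
    if r: "r < ?n" for r
  proof -
    have "(blk C M c d *\<^sub>v x) $ r = (\<Sum>s\<in>{0..<?n}. blk C M c d $$ (r,s) * x $ s)"
      using r by (simp add: x_def scalar_prod_def)
    also have "\<dots> = (\<Sum>s\<in>{0..<?n}. (if s = r then (if r div C = j then c (r div C) else 0) else 0)
        + (\<lambda>k. d (r div C) k * (if k = j then 1 else 0)) (s div C))"
      using r by (intro sum.cong refl) (auto simp: blk_index x_def)
    also have "\<dots> = (if r div C = j then c (r div C) else 0) + real C * (\<Sum>k\<in>{0..<M}. d (r div C) k * (if k = j then 1 else 0))"
      using r sum_div[of "\<lambda>k. d (r div C) k * (if k = j then 1 else 0)" C M]
      by (simp add: sum.distrib sum.delta)
    also have "(\<Sum>k\<in>{0..<M}. d (r div C) k * (if k = j then 1 else 0)) = d (r div C) j"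
      using j by (simp add: sum.delta if_distrib cong: if_cong)
    finally show ?thesis .
  qed
  have "real C * (vv * vv) = (\<Sum>r\<in>{0..<?n}. (\<lambda>k. if k = i then vv * vv else 0) (r div C))"
    using i sum_div[of "\<lambda>k. if k = i then vv * vv else 0" C M] by (simp add: sum.delta)
  also have "\<dots> \<le> (\<Sum>r\<in>{0..<?n}. (blk C M c d *\<^sub>v x) $ r * (blk C M c d *\<^sub>v x) $ r)"
  proof (rule sum_mono)
    fix r assume r: "r \<in> {0..<?n}"
    show "(\<lambda>k. if k = i then vv * vv else 0) (r div C) \<le> (blk C M c d *\<^sub>v x) $ r * (blk C M c d *\<^sub>v x) $ r"
      using Yx[of r] r unfolding vv_def by auto
  qed
  also have "\<dots> = (blk C M c d *\<^sub>v x) \<bullet> (blk C M c d *\<^sub>v x)" by (simp add: scalar_prod_def)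
  also have "\<dots> \<le> x \<bullet> x" using Y_norm[OF svd xc] Y by simp
  also have "\<dots> = real C" by (rule xx)
  finally have "real C * (vv * vv) \<le> real C * 1" by simp
  then have "vv * vv \<le> 1" using C0 by simp
  then have "\<bar>vv\<bar> \<le> 1" by (metis abs_le_square_iff abs_one mult_1 power2_eq_square)
  then show ?thesis unfolding vv_def .
qed



lemma abs_bound_div:
  fixes x :: real
  assumes "real C * \<bar>x\<bar> \<le> 2" "C \<ge> 1" "M \<ge> 1"
  shows "\<bar>x\<bar> \<le> 2 * real M / real C"
proof -
  have C0: "real C > 0" using assms(2) by simp
  have "real C * \<bar>x\<bar> \<le> 2 * real M" using assms(1,3) by linarith
  then show ?thesis using C0 by (simp add: field_simps)
qed

theorem propositionB4:
  "\<exists>K::real. \<forall>(C::nat) (M::nat) (a::nat \<Rightarrow> real) (b::nat \<Rightarrow> nat \<Rightarrow> real).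
     C \<ge> 1 \<longrightarrow> M \<ge> 1 \<longrightarrow>
     (\<exists>\<beta>::nat \<Rightarrow> nat \<Rightarrow> real.
        msgn (Qmat C M a b) =
          mat (C*M) (C*M) (\<lambda>(r,s). (if r = s then sgn (a (r div C)) else 0) + \<beta> (r div C) (s div C))
        \<and> (\<forall>i<M. \<forall>j<M. \<bar>\<beta> i j\<bar> \<le> K * real M / real C))"
proof (intro exI[of _ "2::real"] allI impI)
  fix C M :: nat and a :: "nat \<Rightarrow> real" and b :: "nat \<Rightarrow> nat \<Rightarrow> real"
  assume C1: "C \<ge> 1" and M1: "M \<ge> 1"
  have Qb: "Qmat C M a b = blk C M a b" by (rule Qmat_blk)
  have ex: "\<exists>U S V. is_svd (C*M) (blk C M a b) U S V" by (rule svd_exists) simp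
  have "\<exists>Y. \<exists>U S V. is_svd (dim_row (Qmat C M a b)) (Qmat C M a b) U S V \<and> Y = U * map_mat sgn S * transpose_mat V"
    using ex unfolding Qb by auto
  from someI_ex[OF this] obtain U S V where svd: "is_svd (C*M) (blk C M a b) U S V"
    and Yeq: "msgn (Qmat C M a b) = U * map_mat sgn S * transpose_mat V"
    unfolding msgn_def Qb by auto
  obtain c d where Yb: "U * map_mat sgn S * transpose_mat V = blk C M c d"
    using Y_inA[OF svd] unfolding inA_def by blast
  define \<beta> where "\<beta> = (\<lambda>i j. d i j + (if C = 1 \<and> i = j then c i - sgn (a i) else 0))"
  have "blk C M c d = mat (C*M) (C*M) (\<lambda>(r,s). (if r = s then sgn (a (r div C)) else 0) + \<beta> (r div C) (s div C))"
  proof (rule eq_matI)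
    fix r s assume "r < dim_row (mat (C*M) (C*M) (\<lambda>(r,s). (if r = s then sgn (a (r div C)) else 0) + \<beta> (r div C) (s div C)))"
      "s < dim_col (mat (C*M) (C*M) (\<lambda>(r,s). (if r = s then sgn (a (r div C)) else 0) + \<beta> (r div C) (s div C)))"
    then have r: "r < C*M" and s: "s < C*M" by auto
    show "blk C M c d $$ (r,s) = mat (C*M) (C*M) (\<lambda>(r,s). (if r = s then sgn (a (r div C)) else 0) + \<beta> (r div C) (s div C)) $$ (r,s)"
    proof (cases "C = 1")
      case True
      then show ?thesis using r s by (simp add: blk_index \<beta>_def)
    next
      case False
      then have C2: "C \<ge> 2" using C1 by simp
      have "c (r div C) = sgn (a (r div C))" by (rule c_eq_sgn[OF svd Yb C2 div_lt[OF r]])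
      then show ?thesis using r s False by (auto simp: blk_index \<beta>_def)
    qed
  qed auto
  then have meq: "msgn (Qmat C M a b) = mat (C*M) (C*M) (\<lambda>(r,s). (if r = s then sgn (a (r div C)) else 0) + \<beta> (r div C) (s div C))"
    using Yeq Yb by simp
  have "\<bar>\<beta> i j\<bar> \<le> 2 * real M / real C" if i: "i < M" and j: "j < M" for i j
  proof -
    have B: "\<bar>(if i = j then c i else 0) + real C * d i j\<bar> \<le> 1" by (rule block_bound[OF svd Yb i j C1])
    show ?thesis
    proof (cases "i = j")
      case False
      then have "real C * \<bar>d i j\<bar> \<le> 1" using B by (simp add: abs_mult)
      then have "real C * \<bar>\<beta> i j\<bar> \<le> 2" using False unfolding \<beta>_def by simp
      then show ?thesis by (rule abs_bound_div[OF _ C1 M1])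
    next
      case True
      show ?thesis
      proof (cases "C = 1")
        case C: True
        have "\<bar>c i + d i i\<bar> \<le> 1" using B True C by simp
        moreover have "\<bar>sgn (a i)\<bar> \<le> 1" by (simp add: abs_sgn_eq)
        moreover have "\<beta> i j = (c i + d i i) - sgn (a i)" unfolding \<beta>_def using True C by simp
        ultimately have "\<bar>\<beta> i j\<bar> \<le> 2" using abs_triangle_ineq4[of "c i + d i i" "sgn (a i)"] by linarith
        then show ?thesis using C M1 by simp
      next
        case C: False
        then have C2: "C \<ge> 2" using C1 by simp
        have ci: "c i = sgn (a i)" by (rule c_eq_sgn[OF svd Yb C2 i])
        have "\<bar>c i\<bar> \<le> 1" unfolding ci by (simp add: abs_sgn_eq)
        moreover have "\<bar>c i + real C * d i i\<bar> \<le> 1" using B True by simp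
        ultimately have "\<bar>real C * d i i\<bar> \<le> 2" by linarith
        then have "real C * \<bar>\<beta> i j\<bar> \<le> 2" using True C unfolding \<beta>_def by (simp add: abs_mult)
        then show ?thesis by (rule abs_bound_div[OF _ C1 M1])
      qed
    qed
  qed
  then show "\<exists>\<beta>::nat \<Rightarrow> nat \<Rightarrow> real.
        msgn (Qmat C M a b) =
          mat (C*M) (C*M) (\<lambda>(r,s). (if r = s then sgn (a (r div C)) else 0) + \<beta> (r div C) (s div C))
        \<and> (\<forall>i<M. \<forall>j<M. \<bar>\<beta> i j\<bar> \<le> 2 * real M / real C)"
    using meq by blast
qed


end
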